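(* The entropy of a runtime trace of a program compiled according to the principle that every machine code instruction that writes introduces maximal entropy is $32(n+m)$ bits, where $m$ is the number of input words and $n$ is the number of distinct arithmetic instructions that write in the trace, counted once only per set if they belong to a set of trailer instructions for the same location, and once each otherwise.
   Context: Setting (encrypted computing with chaotic compilation). A processor computes on encrypted 32-bit words. The compiler is stochastic: each compilation of the same source code produces machine code of identical structure and identical runtime trace structure, differing only in encrypted constants embedded in instructions. At each program point the compiler maintains an obfuscation scheme: for every register and memory location $l$, an offset $\Delta l\in\mathbb{Z}/2^{32}$ such that the plaintext stored in $l$ at runtime equals the nominal (programmer-intended) value plus $\Delta l$ (mod $2^{32}$). Every arithmetic instruction has an embedded encrypted constant that can be chosen to set the offset of the location it writes to any desired value. The trace $T$ is the runtime sequence of writes to registers and memory locations (viewed at the level of plaintext values beneath the encryption); it is a random variable over recompilations, and its entropy is $\mathrm{H}(T)=\mathbb{E}[-\log_2 f_T]$ where $f_T$ is its probability distribution. An input is a read in the trace of a location not previously written in the trace; its offset is specified by the scheme. The principle "every instruction that writes introduces maximal entropy" means each arithmetic instruction that writes chooses the new offset of its target location uniformly at random in $\mathbb{Z}/2^{32}$, independently of all other choices (input offsets likewise uniform and independent), except as forced by correctness: copy instructions preserve data exactly, and where two control paths join (ends of loops, after conditionals, subroutine returns, goto targets) the offset of each location must coincide on all joining paths. An instruction that adjusts the offset of a location $l$ to the final value common with a joining control path (the last write to $l$ before the join on its path) is a trailer instruction; trailer instructions for the same location at a join form a set sharing one common offset. Executing the same instruction again (or another instruction with an already-determined offset) adds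 no new choice. *)

theory Defs
  imports "HOL-Probability.Probability" "HOL-Library.Word"
begin

text \<open>Plaintext words beneath the encryption: 32-bit words, i.e. Z/2^32.\<close>
type_synonym w32 = "32 word"

text \<open>Events of a runtime trace (at the level of the program, i.e. independent of
the particular compilation):
  Rd l      : a read of location l (its plaintext value appears in the trace);
  Ar i l v  : arithmetic instruction i writes location l, nominal value v;
  Cp l l'   : copy instruction, copies the content of l' into l.\<close>
datatype ('l, 'i) event = Rd 'l | Ar 'i 'l w32 | Cp 'l 'l

fun ev_writes :: "('l, 'i) event \<Rightarrow> 'l set" where
  "ev_writes (Rd l) = {}"
| "ev_writes (Ar i l v) = {l}"
| "ev_writes (Cp l l') = {l}"

fun ev_reads :: "('l, 'i) event \<Rightarrow> 'l set" where
  "ev_reads (Rd l) = {l}"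
| "ev_reads (Ar i l v) = {}"
| "ev_reads (Cp l l') = {l'}"

definition inputs :: "('l, 'i) event list \<Rightarrow> 'l set" where
  "inputs es = {l. \<exists>k < length es. l \<in> ev_reads (es ! k) \<and>
                    (\<forall>j < k. l \<notin> ev_writes (es ! j))}"

definition arith_instrs :: "('l, 'i) event list \<Rightarrow> 'i set" where
  "arith_instrs es = {i. \<exists>l v. Ar i l v \<in> set es}"

text \<open>Trailer sets: a family of pairwise disjoint sets of instructions, each set
consisting of the trailer instructions for one location at one join.\<close>
definition choice_class :: "'i set set \<Rightarrow> 'i \<Rightarrow> 'i set" where
  "choice_class Tr i = (if \<exists>A\<in>Tr. i \<in> A then (THE A. A \<in> Tr \<and> i \<in> A) else {i})"

text \<open>The independent random choices of the obfuscation scheme: an offset for each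
input location (Inl l) and one offset per choice class of arithmetic instruction (Inr c).\<close>
definition choice_points :: "'i set set \<Rightarrow> ('l, 'i) event list \<Rightarrow> ('l + 'i set) set" where
  "choice_points Tr es = Inl ` inputs es \<union> Inr ` (choice_class Tr ` arith_instrs es)"

fun run :: "'i set set \<Rightarrow> (('l + 'i set) \<Rightarrow> w32) \<Rightarrow> ('l \<Rightarrow> w32) \<Rightarrow>
            ('l, 'i) event list \<Rightarrow> ('l \<times> w32) list" where
  "run Tr \<sigma> p [] = []"
| "run Tr \<sigma> p (Rd l # es) = (l, p l) # run Tr \<sigma> p es"
| "run Tr \<sigma> p (Ar i l v # es) =
     (let x = v + \<sigma> (Inr (choice_class Tr i)) in (l, x) # run Tr \<sigma> (p(l := x)) es)"
| "run Tr \<sigma> p (Cp l l' # es) = (l, p l') # run Tr \<sigma> (p(l := p l')) es"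

definition plain_trace :: "'i set set \<Rightarrow> ('l \<Rightarrow> w32) \<Rightarrow> ('l, 'i) event list \<Rightarrow>
                           (('l + 'i set) \<Rightarrow> w32) \<Rightarrow> ('l \<times> w32) list" where
  "plain_trace Tr init es \<sigma> = run Tr \<sigma> (\<lambda>l. init l + \<sigma> (Inl l)) es"

text \<open>Maximal entropy principle: all choices independent and uniform on Z/2^32.\<close>
definition offsets_pmf :: "'i set set \<Rightarrow> ('l, 'i) event list \<Rightarrow> (('l + 'i set) \<Rightarrow> w32) pmf" where
  "offsets_pmf Tr es = Pi_pmf (choice_points Tr es) 0 (\<lambda>_. pmf_of_set UNIV)"

text \<open>The trace as a random variable over recompilations.\<close>
definition trace_pmf :: "'i set set \<Rightarrow> ('l \<Rightarrow> w32) \<Rightarrow> ('l, 'i) event list \<Rightarrow> ('l \<times> w32) list pmf" where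
  "trace_pmf Tr init es = map_pmf (plain_trace Tr init es) (offsets_pmf Tr es)"

definition entropy_bits :: "'a pmf \<Rightarrow> real" where
  "entropy_bits P = (\<Sum>x\<in>set_pmf P. - pmf P x * log 2 (pmf P x))"

end

theory Submission
  imports Defs
begin

lemma run_length: "length (run Tr \<sigma> p es) = length es"
proof (induction es arbitrary: p)
  case (Cons e es) then show ?case by (cases e) (auto simp: Let_def)
qed simp

lemma run_ar: "k < length es \<Longrightarrow> es ! k = Ar i l v \<Longrightarrow>
    run Tr \<sigma> p es ! k = (l, v + \<sigma> (Inr (choice_class Tr i)))"
proof (induction es arbitrary: p k)
  case (Cons e es) then show ?case by (cases e; cases k) (auto simp: Let_def)
qed simp

lemma run_rd: "k < length es \<Longrightarrow> l \<in> ev_reads (es ! k) \<Longrightarrow>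
    (\<forall>j<k. l \<notin> ev_writes (es ! j)) \<Longrightarrow> snd (run Tr \<sigma> p es ! k) = p l"
proof (induction es arbitrary: p k)
  case (Cons e es)
  show ?case
  proof (cases k)
    case 0 then show ?thesis using Cons by (cases e) auto
  next
    case (Suc k')
    have nw: "l \<notin> ev_writes e" using Cons(4)[rule_format, of 0] Suc by simp
    have rest: "\<forall>j<k'. l \<notin> ev_writes (es ! j)" using Cons(4) Suc by auto
    have k': "k' < length es" "l \<in> ev_reads (es ! k')" using Cons(2,3) Suc by auto
    show ?thesis
    proof (cases e)
      case (Rd x) then show ?thesis using Cons.IH[OF k' rest, of p] Suc by simp
    next
      case (Ar i x v) then show ?thesis
        using Cons.IH[OF k' rest, of "p(x := v + \<sigma> (Inr (choice_class Tr i)))"] Suc nw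
        by (simp add: Let_def fun_upd_def)
    next
      case (Cp x y) then show ?thesis
        using Cons.IH[OF k' rest, of "p(x := p y)"] Suc nw by (simp add: fun_upd_def)
    qed
  qed
qed simp

lemma finite_inputs: "finite (inputs es)"
proof -
  have "inputs es \<subseteq> \<Union> (ev_reads ` set es)"
    unfolding inputs_def by (auto intro: nth_mem)
  moreover have "finite (ev_reads e)" for e :: "('a,'b) event" by (cases e) auto
  ultimately show ?thesis by (meson finite_UN_I finite_set finite_subset)
qed

lemma finite_arith: "finite (arith_instrs es)"
proof -
  have "arith_instrs es \<subseteq> (\<lambda>e. case e of Ar i l v \<Rightarrow> i) ` set es"
    unfolding arith_instrs_def by force
  then show ?thesis by (rule finite_subset) simp
qed

lemma entropy_uniform:
  assumes "finite X" "X \<noteq> {}"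
  shows "entropy_bits (pmf_of_set X) = log 2 (card X)"
proof -
  have "entropy_bits (pmf_of_set X) = (\<Sum>x\<in>X. - (1 / card X) * log 2 (1 / card X))"
    unfolding entropy_bits_def using assms by (intro sum.cong) auto
  also have "\<dots> = - log 2 (1 / card X)" using assms by simp
  also have "\<dots> = log 2 (card X)" using assms by (simp add: log_divide)
  finally show ?thesis .
qed

theorem lemma1:
  fixes es :: "('l, 'i) event list" and Tr :: "'i set set" and init :: "'l \<Rightarrow> w32"
  assumes "disjoint Tr"
  shows "entropy_bits (trace_pmf Tr init es)
           = 32 * (real (card (choice_class Tr ` arith_instrs es)) + real (card (inputs es)))"
proof -
  define S where "S = choice_points Tr es"
  define \<Omega> where "\<Omega> = PiE_dflt S (0::w32) (\<lambda>_. UNIV)"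
  have finS: "finite S" unfolding S_def choice_points_def
    using finite_inputs finite_arith by blast
  have cardS: "card S = card (choice_class Tr ` arith_instrs es) + card (inputs es)"
  proof -
    have "card S = card (Inl ` inputs es :: ('l + 'i set) set) + card (Inr ` (choice_class Tr ` arith_instrs es) :: ('l + 'i set) set)"
      unfolding S_def choice_points_def
      by (rule card_Un_disjoint) (auto intro: finite_inputs finite_arith)
    also have "\<dots> = card (inputs es) + card (choice_class Tr ` arith_instrs es)"
      by (simp add: card_image)
    finally show ?thesis by simp
  qed
  have finO: "finite \<Omega>" unfolding \<Omega>_def using finS by auto
  have cardO: "card \<Omega> = (2^32) ^ card S" unfolding \<Omega>_def
    using finS by (simp add: card_PiE_dflt card_word)
  have neO: "\<Omega> \<noteq> {}" unfolding \<Omega>_def by simp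
  have off: "offsets_pmf Tr es = pmf_of_set \<Omega>"
    unfolding offsets_pmf_def \<Omega>_def S_def[symmetric]
    by (rule Pi_pmf_of_set) (use finS in auto)
  have inj: "inj_on (plain_trace Tr init es) \<Omega>"
  proof (rule inj_onI)
    fix s1 s2 assume s1: "s1 \<in> \<Omega>" and s2: "s2 \<in> \<Omega>"
      and eq: "plain_trace Tr init es s1 = plain_trace Tr init es s2"
    show "s1 = s2"
    proof
      fix x
      show "s1 x = s2 x"
      proof (cases "x \<in> S")
        case False then show ?thesis using s1 s2 by (simp add: \<Omega>_def PiE_dflt_def)
      next
        case True
        then consider (inp) l where "l \<in> inputs es" "x = Inl l"
          | (ar) i where "i \<in> arith_instrs es" "x = Inr (choice_class Tr i)"
          unfolding S_def choice_points_def by blast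
        then show ?thesis
        proof cases
          case inp
          then obtain k where k: "k < length es" "l \<in> ev_reads (es ! k)"
            "\<forall>j<k. l \<notin> ev_writes (es ! j)" unfolding inputs_def by blast
          from eq have "snd (plain_trace Tr init es s1 ! k) = snd (plain_trace Tr init es s2 ! k)"
            by simp
          then have "init l + s1 (Inl l) = init l + s2 (Inl l)"
            unfolding plain_trace_def using run_rd[OF k] by simp
          then show ?thesis using inp by simp
        next
          case ar
          then obtain l v where "Ar i l v \<in> set es" unfolding arith_instrs_def by blast
          then obtain k where k: "k < length es" "es ! k = Ar i l v"
            by (meson in_set_conv_nth)
          from eq have "plain_trace Tr init es s1 ! k = plain_trace Tr init es s2 ! k"
            by simp
          then show ?thesis unfolding plain_trace_def using run_ar[OF k] ar by simp
        qed
      qed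
    qed
  qed
  have "trace_pmf Tr init es = pmf_of_set (plain_trace Tr init es ` \<Omega>)"
    unfolding trace_pmf_def off using inj neO finO by (rule map_pmf_of_set_inj)
  then have "entropy_bits (trace_pmf Tr init es) = log 2 (card (plain_trace Tr init es ` \<Omega>))"
    using finO neO by (simp add: entropy_uniform)
  also have "\<dots> = log 2 ((2^32) ^ card S)" using card_image[OF inj] cardO by simp
  also have "\<dots> = log 2 ((2::real) ^ (32 * card S))"
    by (simp add: power_mult)
  also have "\<dots> = 32 * real (card S)"
    by (subst log_nat_power) auto
  finally show ?thesis using cardS by simp
qed

end
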